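(* Let $f$ be an entire function of genus $1$ having only negative zeros and such that $f(0)>0$; denote its zeros, repeated according to multiplicity, by $-a_1,-a_2,\ldots$ with $0<a_1\leq a_2\leq\cdots$. Let $a>0$, $b>0$ and $c=a+b$. Then the function $$x\mapsto\log\frac{f(x+a)f(x+b)}{f(x)f(x+c)},\qquad x>0,$$ is a generalized Stieltjes function of order $2$, and its representing measure has density $\chi_{(0,a)}*\chi_{(0,b)}*\mu$ with respect to Lebesgue measure, where $\mu=\sum_{n}\epsilon_{a_n}$.
   Context: A generalized Stieltjes function of order $2$ is a function $F(x)=\int_0^\infty\frac{d\mu(t)}{(x+t)^2}+c$ on $(0,\infty)$ with $\mu$ a positive measure on $[0,\infty)$ (the representing measure) making the integral converge and $c\geq0$. $\chi_I$ is the indicator function of $I$, $\epsilon_s$ the point mass at $s$, and $*$ denotes convolution. *)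

theory Defs
  imports "HOL-Analysis.Analysis"
begin

text \<open>Zeros of f are -r n for n in N, where N is either all of nat (infinitely
many zeros) or an initial segment {..<m} (finitely many zeros).\<close>

definition admissible_index :: "nat set \<Rightarrow> bool" where
  "admissible_index N \<longleftrightarrow> N = UNIV \<or> (\<exists>m. N = {..<m})"

text \<open>f is an entire function of genus 1 whose zeros (with multiplicity) are exactly
the points -r n, n in N, with 0 < r 0 <= r 1 <= ..., and f 0 > 0.  By the
definition of the genus via the Hadamard/Weierstrass factorization this means
f z = C exp(alpha z) prod (1 + z/r n) exp(-z/r n) with C = f 0 > 0,
sum 1/r_n^2 < infinity, and the genus is not 0, i.e. it is not the case that
sum 1/r_n < infinity and f z = C prod (1 + z/r n).\<close>

definition genus1_neg_zeros :: "(complex \<Rightarrow> complex) \<Rightarrow> (nat \<Rightarrow> real) \<Rightarrow> nat set \<Rightarrow> bool" where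
  "genus1_neg_zeros f r N \<longleftrightarrow>
     admissible_index N \<and>
     f holomorphic_on UNIV \<and>
     (\<forall>n\<in>N. 0 < r n) \<and>
     (\<forall>m\<in>N. \<forall>n\<in>N. m \<le> n \<longrightarrow> r m \<le> r n) \<and>
     summable (\<lambda>n. if n \<in> N then 1 / (r n)^2 else 0) \<and>
     Re (f 0) > 0 \<and> Im (f 0) = 0 \<and>
     (\<exists>\<alpha>::complex.
        (\<forall>z. (\<lambda>n. if n \<in> N then (1 + z / of_real (r n)) * exp (- z / of_real (r n)) else 1)
               has_prod (f z / (f 0 * exp (\<alpha> * z)))) \<and>
        \<not> (summable (\<lambda>n. if n \<in> N then 1 / r n else 0) \<and>
           \<alpha> = of_real (\<Sum>n. if n \<in> N then 1 / r n else 0)))"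

definition conv_fun :: "(real \<Rightarrow> real) \<Rightarrow> (real \<Rightarrow> real) \<Rightarrow> real \<Rightarrow> real" where
  "conv_fun \<phi> \<psi> t = (LINT s|lborel. \<phi> s * \<psi> (t - s))"

definition conv_pointmasses :: "(real \<Rightarrow> real) \<Rightarrow> (nat \<Rightarrow> real) \<Rightarrow> nat set \<Rightarrow> real \<Rightarrow> real" where
  "conv_pointmasses h r N t = (\<Sum>n. if n \<in> N then h (t - r n) else 0)"

definition gen_stieltjes2_density :: "(real \<Rightarrow> real) \<Rightarrow> (real \<Rightarrow> real) \<Rightarrow> bool" where
  "gen_stieltjes2_density F g \<longleftrightarrow>
     (\<forall>t\<ge>0. 0 \<le> g t) \<and> g \<in> borel_measurable lborel \<and>
     (\<exists>c\<ge>0. \<forall>x>0. set_integrable lborel {0..} (\<lambda>t. g t / (x + t)^2) \<and>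
                    F x = (LINT t:{0..}|lborel. g t / (x + t)^2) + c)"

end

theory Submission
  imports Defs
begin


definition hh :: "real \<Rightarrow> real \<Rightarrow> real \<Rightarrow> real" where
  "hh a b s = max 0 s - max 0 (s-a) - max 0 (s-b) + max 0 (s-(a+b))"

lemma conv_ind:
  assumes "a > 0" "b > 0"
  shows "conv_fun (indicator {0<..<a}) (indicator {0<..<b}) s = hh a b s"
proof -
  have eq: "(\<lambda>u. indicator {0<..<a} u * indicator {0<..<b} (s-u) :: real)
        = indicator {max 0 (s-b)<..<min a s}"
    by (rule ext) (auto simp: indicator_def)
  show ?thesis
  proof (cases "max 0 (s-b) \<le> min a s")
    case True
    then show ?thesis unfolding conv_fun_def eq hh_def using assms
      by (simp add: max_def min_def split: if_splits)
  next
    case False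
    then have "{max 0 (s-b)<..<min a s} = {}" by auto
    then show ?thesis unfolding conv_fun_def eq hh_def using assms False
      by (simp add: max_def min_def split: if_splits)
  qed
qed

lemma hh_nonneg: "a > 0 \<Longrightarrow> b > 0 \<Longrightarrow> 0 \<le> hh a b s"
  unfolding hh_def by (simp add: max_def)
lemma hh_le: "a > 0 \<Longrightarrow> b > 0 \<Longrightarrow> hh a b s \<le> a"
  unfolding hh_def by (simp add: max_def)
lemma hh_zero: "a > 0 \<Longrightarrow> b > 0 \<Longrightarrow> s \<le> 0 \<Longrightarrow> hh a b s = 0"
  unfolding hh_def by (simp add: max_def)
lemma hh_zero2: "a > 0 \<Longrightarrow> b > 0 \<Longrightarrow> s \<ge> a + b \<Longrightarrow> hh a b s = 0"
  unfolding hh_def by (simp add: max_def)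
lemma hh_cont: "continuous_on S (hh a b)"
  unfolding hh_def by (intro continuous_intros)



definition BB :: "real \<Rightarrow> real \<Rightarrow> real \<Rightarrow> real \<Rightarrow> real" where
  "BB x r d t = ln (x + max t (r+d)) + (x+r+d)/(x + max t (r+d))"

lemma aux_deriv: "(u::real) > 0 \<Longrightarrow> 1/u - K/(u*u) = (u - K)/u^2"
  by (simp add: field_simps power2_eq_square)

lemma BB_deriv:
  assumes "x + r + d > 0" "t \<noteq> r + d" "x + t > 0"
  shows "(BB x r d has_real_derivative max 0 (t-r-d)/(x+t)^2) (at t)"
proof (cases "t > r + d")
  case True
  have D0: "((\<lambda>t. ln (x + t) + (x+r+d)/(x+t)) has_real_derivative
        (1/(x+t) - (x+r+d)/((x+t)*(x+t)))) (at t)"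
    using assms by (auto intro!: derivative_eq_intros)
        (simp only: minus_divide_left minus_add_distrib diff_conv_add_uminus)
  have m: "max 0 (t-r-d) = (x+t) - (x+r+d)" using True by simp
  have E: "1/(x+t) - (x+r+d)/((x+t)*(x+t)) = max 0 (t-r-d)/(x+t)^2"
    unfolding m by (rule aux_deriv) (use assms in simp)
  have D: "((\<lambda>t. ln (x + t) + (x+r+d)/(x+t)) has_real_derivative max 0 (t-r-d)/(x+t)^2) (at t)"
    using D0 unfolding E .
  show ?thesis
    by (rule has_field_derivative_transform_within_open[OF D, where S="{r+d<..}"])
       (use True in \<open>auto simp: BB_def\<close>)
next
  case False
  then have "t < r + d" using assms by auto
  have "max 0 (t-r-d)/(x+t)^2 = 0"
    using \<open>t < r + d\<close> by simp
  then have D: "((\<lambda>t. ln (x + (r+d)) + (x+r+d)/(x+(r+d))) has_real_derivative max 0 (t-r-d)/(x+t)^2) (at t)"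
    by (simp only:) (rule DERIV_const)
  show ?thesis
    by (rule has_field_derivative_transform_within_open[OF D, where S="{..<r+d}"])
       (use \<open>t < r + d\<close> in \<open>auto simp: BB_def\<close>)
qed

lemma BB_hi: "d \<le> s - r \<Longrightarrow> BB x r d s = ln (x+s) + (x+r+d)/(x+s)"
  unfolding BB_def by (cases "s = r + d") (simp_all add: max_def add.assoc)
lemma BB_lo: "s \<le> r + d \<Longrightarrow> x + r + d > 0 \<Longrightarrow> BB x r d s = ln (x+r+d) + 1"
  unfolding BB_def by (simp add: max_def add.assoc)
lemma aux_frac: "(y::real) > 0 \<Longrightarrow> a > 0 \<Longrightarrow> b > 0 \<Longrightarrow>
   y/(y+(a+b)) - (y+a)/(y+(a+b)) - (y+b)/(y+(a+b)) + (y+(a+b))/(y+(a+b)) = 0"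
proof -
  have "y/(y+(a+b)) - (y+a)/(y+(a+b)) - (y+b)/(y+(a+b)) + (y+(a+b))/(y+(a+b)) = (y - (y+a) - (y+b) + (y+(a+b)))/(y+(a+b))"
    by (simp only: diff_divide_distrib add_divide_distrib)
  then show ?thesis by simp
qed

lemma BB_cont:
  assumes "x + r + d > 0"
  shows "continuous_on S (BB x r d)"
proof -
  have "\<And>t. x + max t (r+d) > 0" using assms by (simp add: max_def)
  then show ?thesis unfolding BB_def
    by (intro continuous_intros) (auto simp: less_imp_neq[symmetric])
qed

definition Lf :: "real \<Rightarrow> real \<Rightarrow> real \<Rightarrow> real" where
  "Lf a b y = ln (y+a) + ln (y+b) - ln y - ln (y+(a+b))"

lemma piece_integral:
  assumes "a > 0" "b > 0" "x > 0" "r > 0"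
  shows "((\<lambda>t. hh a b (t-r)/(x+t)^2) has_integral Lf a b (x+r)) {r..r+(a+b)}"
proof -
  define G where "G t = BB x r 0 t - BB x r a t - BB x r b t + BB x r (a+b) t" for t
  have "((\<lambda>t. hh a b (t-r)/(x+t)^2) has_integral (G (r+(a+b)) - G r)) {r..r+(a+b)}"
  proof (rule fundamental_theorem_of_calculus_interior_strong[where S="{r+a, r+b}"])
    show "continuous_on {r..r + (a + b)} G"
      unfolding G_def using assms by (intro continuous_intros BB_cont) auto
    fix t assume t: "t \<in> {r<..<r + (a + b)} - {r + a, r + b}"
    have "(G has_real_derivative (max 0 (t-r-0)/(x+t)^2 - max 0 (t-r-a)/(x+t)^2
           - max 0 (t-r-b)/(x+t)^2 + max 0 (t-r-(a+b))/(x+t)^2)) (at t)"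
      unfolding G_def using assms t
      by (intro derivative_intros BB_deriv) auto
    moreover have "max 0 (t-r-0)/(x+t)^2 - max 0 (t-r-a)/(x+t)^2
           - max 0 (t-r-b)/(x+t)^2 + max 0 (t-r-(a+b))/(x+t)^2 = hh a b (t-r)/(x+t)^2"
      unfolding hh_def by (simp add: diff_divide_distrib add_divide_distrib algebra_simps)
    ultimately show "(G has_vector_derivative hh a b (t - r) / (x + t)\<^sup>2) (at t)"
      by (simp add: has_real_derivative_iff_has_vector_derivative)
  qed (use assms in auto)
  moreover have "G (r+(a+b)) - G r = Lf a b (x+r)"
  proof -
    let ?y = "x + r"
    have h1: "BB x r d (r+(a+b)) = ln (x+(r+(a+b))) + (x+r+d)/(x+(r+(a+b)))" if "d \<le> a+b" for d
      by (rule BB_hi) (use that in simp)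
    have h2: "BB x r d r = ln (x+r+d) + 1" if "d \<ge> 0" for d
      by (rule BB_lo) (use that assms in simp_all)
    have "G (r+(a+b)) - G r = ((x+r+0)/(x+(r+(a+b))) - (x+r+a)/(x+(r+(a+b)))
       - (x+r+b)/(x+(r+(a+b))) + (x+r+(a+b))/(x+(r+(a+b))))
       - ln (x+r+0) + ln (x+r+a) + ln (x+r+b) - ln (x+r+(a+b))"
      unfolding G_def using assms by (simp only: h1 h2 less_imp_le order_refl add_increasing2 add_increasing le_add_same_cancel1)
    also have "... = Lf a b (x+r)"
      using aux_frac[of "x+r" a b] assms unfolding Lf_def by (simp add: add.assoc)
    finally show ?thesis .
  qed
  ultimately show ?thesis by (simp only:)
qed



lemma Lf_bounds:
  assumes "y > 0" "a > 0" "b > 0"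
  shows "0 \<le> Lf a b y" "Lf a b y \<le> a*b/y^2"
proof -
  have q: "(y+a)*(y+b) = y*(y+(a+b)) + a*b" by (simp add: algebra_simps)
  have pos: "y*(y+(a+b)) > 0" using assms by simp
  have L: "Lf a b y = ln (1 + a*b/(y*(y+(a+b))))"
  proof -
    have "1 + a*b/(y*(y+(a+b))) = ((y+a)*(y+b))/(y*(y+(a+b)))"
      using pos q by (simp add: field_simps)
    then show ?thesis using assms unfolding Lf_def
      by (simp add: ln_div ln_mult)
  qed
  have nn: "0 \<le> a*b/(y*(y+(a+b)))" using assms by simp
  show "0 \<le> Lf a b y" unfolding L using nn by simp
  have "Lf a b y \<le> a*b/(y*(y+(a+b)))"
    unfolding L using ln_le_minus_one[of "1 + a*b/(y*(y+(a+b)))"] nn by simp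
  also have "\<dots> \<le> a*b/y^2"
    using assms by (intro divide_left_mono) (auto simp: power2_eq_square intro!: mult_left_mono)
  finally show "Lf a b y \<le> a*b/y^2" .
qed



lemma factor_real:
  assumes "R > 0"
  shows "(1 + complex_of_real w / complex_of_real R) * exp (- complex_of_real w / complex_of_real R)
       = complex_of_real ((1 + w/R) * exp (- w/R))"
  by (simp add: of_real_exp)

lemma abs_frac: "(B::real) \<noteq> 0 \<Longrightarrow> A/R2 * E = A/B * (B/R2) * E"
  by simp

lemma factor_identity:
  assumes "R > 0" "x > 0" "a > 0" "b > 0"
  shows "((1 + (x+a)/R) * exp (- (x+a)/R)) * ((1 + (x+b)/R) * exp (- (x+b)/R))
    = exp (Lf a b (x+R)) * (((1 + x/R) * exp (- x/R)) * ((1 + (x+(a+b))/R) * exp (- (x+(a+b))/R)))"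
proof -
  define y where "y = x + R"
  have y: "y > 0" using assms unfolding y_def by simp
  have e1: "exp (- (x+a)/R) * exp (- (x+b)/R) = exp (- x/R) * exp (- (x+(a+b))/R)"
    unfolding exp_add[symmetric] using assms by (simp add: field_simps)
  have eL: "exp (Lf a b y) = ((y+a)*(y+b))/(y*(y+(a+b)))"
    unfolding Lf_def using y assms
    by (simp add: exp_diff exp_add)
  have f1: "(1 + (x+a)/R) * (1 + (x+b)/R) = ((y+a)*(y+b))/R^2"
    unfolding y_def using assms by (simp add: field_simps power2_eq_square)
  have f2: "(1 + x/R) * (1 + (x+(a+b))/R) = (y*(y+(a+b)))/R^2"
    unfolding y_def using assms by (simp add: field_simps power2_eq_square)
  have "((1 + (x+a)/R) * exp (- (x+a)/R)) * ((1 + (x+b)/R) * exp (- (x+b)/R))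
      = ((1 + (x+a)/R) * (1 + (x+b)/R)) * (exp (- (x+a)/R) * exp (- (x+b)/R))"
    by (simp only: ac_simps)
  also have "\<dots> = (((y+a)*(y+b))/(y*(y+(a+b)))) * ((1 + x/R) * (1 + (x+(a+b))/R)) *
                     (exp (- x/R) * exp (- (x+(a+b))/R))"
    unfolding e1 f1 f2 by (rule abs_frac) (use y assms in simp)
  also have "\<dots> = exp (Lf a b (x+R)) * (((1 + x/R) * exp (- x/R)) * ((1 + (x+(a+b))/R) * exp (- (x+(a+b))/R)))"
    unfolding y_def[symmetric] eL by (simp only: ac_simps)
  finally show ?thesis .
qed



lemma prod_part:
  fixes f :: "complex \<Rightarrow> complex" and r :: "nat \<Rightarrow> real"
  assumes prod: "\<And>z. (\<lambda>n. if n \<in> N then (1 + z / of_real (r n)) * exp (- z / of_real (r n)) else 1)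
               has_prod (f z / (f 0 * exp (\<alpha> * z)))"
    and pos: "\<And>n. n \<in> N \<Longrightarrow> 0 < r n"
    and f0: "f 0 \<noteq> 0"
    and S: "(\<lambda>n. if n \<in> N then Lf a b (x + r n) else 0) sums S"
    and x: "x > 0" and a: "a > 0" and b: "b > 0"
  shows "f (of_real (x + a)) * f (of_real (x + b)) / (f (of_real x) * f (of_real (x + (a+b))))
          = of_real (exp S)"
proof -
  define p :: "complex \<Rightarrow> nat \<Rightarrow> complex" where "p z n = (if n \<in> N then (1 + z / of_real (r n)) * exp (- z / of_real (r n)) else 1)" for z n
  define P :: "complex \<Rightarrow> complex" where "P z = f z / (f 0 * exp (\<alpha> * z))" for z
  define Lt where "Lt n = (if n \<in> N then Lf a b (x + r n) else 0)" for n
  have hp: "p z has_prod P z" for z unfolding p_def P_def using prod .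
  have fP: "f z = P z * (f 0 * exp (\<alpha> * z))" for z
    unfolding P_def using f0 by simp
  define E :: "real \<Rightarrow> nat \<Rightarrow> real" where "E w n = (if n \<in> N then (1 + w / r n) * exp (- w / r n) else 1)" for w n
  have pE: "p (of_real w) n = of_real (E w n)" for w n
  proof (cases "n \<in> N")
    case True
    show ?thesis by (simp only: p_def E_def if_P[OF True] factor_real[OF pos[OF True]])
  next
    case False
    then show ?thesis by (simp add: p_def E_def)
  qed
  have Epos: "E w n > 0" if "w > 0" for w n
    unfolding E_def using pos that by (simp add: add_pos_pos)
  have key: "p (of_real (x+a)) n * p (of_real (x+b)) n
           = exp (of_real (Lt n)) * (p (of_real x) n * p (of_real (x+(a+b))) n)" for n
  proof (cases "n \<in> N")
    case True
    have "E (x+a) n * E (x+b) n = exp (Lt n) * (E x n * E (x+(a+b)) n)"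
      unfolding E_def Lt_def using True factor_identity[OF pos[OF True] x a b] by simp
    then have "complex_of_real (E (x+a) n * E (x+b) n) = of_real (exp (Lt n) * (E x n * E (x+(a+b)) n))"
      by simp
    then show ?thesis unfolding pE by (simp add: of_real_exp)
  next
    case False
    then show ?thesis unfolding p_def Lt_def by simp
  qed
  have hS: "(\<lambda>n. exp (complex_of_real (Lt n))) has_prod exp (of_real S)"
  proof -
    have "(\<lambda>n. complex_of_real (Lt n)) sums of_real S"
      using S unfolding Lt_def by (rule sums_of_real)
    then show ?thesis
      unfolding has_prod_def by (intro disjI1 sums_imp_has_prod_exp)
  qed
  have h1: "(\<lambda>n. p (of_real (x+a)) n * p (of_real (x+b)) n) has_prod (P (of_real (x+a)) * P (of_real (x+b)))"
    by (intro has_prod_mult hp)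
  have h2: "(\<lambda>n. p (of_real (x+a)) n * p (of_real (x+b)) n) has_prod
            (exp (of_real S) * (P (of_real x) * P (of_real (x+(a+b)))))"
    unfolding key by (intro has_prod_mult hp hS)
  have eqP: "P (of_real (x+a)) * P (of_real (x+b)) = exp (of_real S) * (P (of_real x) * P (of_real (x+(a+b))))"
    using h1 h2 by (rule has_prod_unique2)
  have nz: "P (of_real w) \<noteq> 0" if "w > 0" for w
  proof
    assume "P (of_real w) = 0"
    then have "0 \<in> range (p (of_real w))"
      using has_prod_eq_0_iff[OF hp[of "of_real w"]] by simp
    then obtain n where "p (of_real w) n = 0" by auto
    then show False using Epos[OF that, of n] unfolding pE by simp
  qed
  have nz0: "P (of_real x) \<noteq> 0" using nz x by simp
  have nz3: "P (of_real (x+(a+b))) \<noteq> 0" by (rule nz) (use x a b in simp)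
  have ez: "exp (\<alpha> * of_real (x+a)) * exp (\<alpha> * of_real (x+b))
          = exp (\<alpha> * of_real x) * exp (\<alpha> * of_real (x+(a+b)))"
    unfolding exp_add[symmetric] by (simp add: algebra_simps)
  define K where "K = exp (\<alpha> * of_real x) * exp (\<alpha> * of_real (x+(a+b)))"
  have Knz: "K \<noteq> 0" unfolding K_def by simp
  have "f (of_real (x + a)) * f (of_real (x + b)) = (P (of_real (x+a)) * P (of_real (x+b))) * (f 0 * f 0 * K)"
    unfolding fP[of "of_real (x+a)"] fP[of "of_real (x+b)"] K_def ez[symmetric] by (simp only: ac_simps)
  moreover have "f (of_real x) * f (of_real (x + (a+b))) = (P (of_real x) * P (of_real (x+(a+b)))) * (f 0 * f 0 * K)"
    unfolding fP[of "of_real x"] fP[of "of_real (x+(a+b))"] K_def by (simp only: ac_simps)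
  ultimately show ?thesis
    unfolding eqP using nz0 nz3 Knz f0 by (simp add: of_real_exp)
qed



lemma hh_term_bound:
  assumes a: "a > 0" and b: "b > 0" and R: "R > 0"
  shows "hh a b (t - R) \<le> (a * t^2) * (1 / R^2)"
proof (cases "R < t")
  case True
  have "R^2 \<le> t^2" using True R by (intro power_mono) auto
  then have "1 \<le> t^2 / R^2" using R by simp
  then have "a * 1 \<le> a * (t^2 / R^2)" using a by (intro mult_left_mono) auto
  then show ?thesis using hh_le[OF a b, of "t - R"] by simp
next
  case False
  then have "hh a b (t - R) = 0" using hh_zero[OF a b] by simp
  then show ?thesis using a by simp
qed

lemma g_summable:
  assumes a: "a > 0" and b: "b > 0" and pos: "\<And>n. n \<in> N \<Longrightarrow> 0 < r n"
    and summ: "summable (\<lambda>n. if n \<in> N then 1 / (r n)^2 else 0)"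
  shows "summable (\<lambda>n. if n \<in> N then hh a b (t - r n) else 0)"
proof (rule summable_comparison_test')
  show "summable (\<lambda>n. (a * t^2) * (if n \<in> N then 1 / (r n)^2 else 0))"
    using summ by (rule summable_mult)
  fix n :: nat
  show "norm (if n \<in> N then hh a b (t - r n) else 0) \<le> (a * t^2) * (if n \<in> N then 1 / (r n)^2 else 0)"
    using hh_term_bound[OF a b pos, of n t] hh_nonneg[OF a b] by auto
qed

lemma Lt_summable:
  assumes a: "a > 0" and b: "b > 0" and pos: "\<And>n. n \<in> N \<Longrightarrow> 0 < r n" and x: "x > 0"
    and summ: "summable (\<lambda>n. if n \<in> N then 1 / (r n)^2 else 0)"
  shows "summable (\<lambda>n. if n \<in> N then Lf a b (x + r n) else 0)"
proof (rule summable_comparison_test')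
  show "summable (\<lambda>n. (a * b) * (if n \<in> N then 1 / (r n)^2 else 0))"
    using summ by (rule summable_mult)
  fix n :: nat
  show "norm (if n \<in> N then Lf a b (x + r n) else 0) \<le> (a * b) * (if n \<in> N then 1 / (r n)^2 else 0)"
  proof (cases "n \<in> N")
    case True
    have y: "x + r n > 0" using x pos[OF True] by simp
    have "Lf a b (x + r n) \<le> a*b/(x + r n)^2" by (rule Lf_bounds(2)[OF y a b])
    also have "\<dots> \<le> a*b/(r n)^2"
      using a b x pos[OF True] by (intro divide_left_mono power_mono) auto
    finally show ?thesis using True Lf_bounds(1)[OF y a b] by simp
  qed simp
qed

lemma E_has_integral:
  assumes a: "a > 0" and b: "b > 0" and R: "R > 0" and x: "x > 0"
  shows "((\<lambda>t. hh a b (t - R) / (x + t)^2) has_integral Lf a b (x + R)) UNIV"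
proof (rule has_integral_on_superset[OF piece_integral[OF a b x R]])
  fix t assume "t \<notin> {R..R + (a + b)}"
  then have "t - R \<le> 0 \<or> t - R \<ge> a + b" by auto
  then show "hh a b (t - R) / (x + t)^2 = 0"
    using hh_zero[OF a b] hh_zero2[OF a b] by auto
qed auto



lemma hh_meas[measurable]: "(\<lambda>t. hh a b (f t)) \<in> borel_measurable M" if [measurable]: "f \<in> borel_measurable M"
  unfolding hh_def by measurable

lemma integral_part:
  assumes a: "a > 0" and b: "b > 0" and pos: "\<And>n. n \<in> N \<Longrightarrow> 0 < r n" and x: "x > 0"
    and summ: "summable (\<lambda>n. if n \<in> N then 1 / (r n)^2 else 0)"
  defines "g \<equiv> \<lambda>t. \<Sum>n. if n \<in> N then hh a b (t - r n) else 0"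
  shows "set_integrable lborel {0..} (\<lambda>t. g t/(x+t)^2)"
    and "(LINT t:{0..}|lborel. g t/(x+t)^2) = (\<Sum>n. if n\<in>N then Lf a b (x + r n) else 0)"
proof -
  define E where "E n t = (if n\<in>N then hh a b (t - r n)/(x+t)^2 else 0)" for n t
  define Lt where "Lt n = (if n\<in>N then Lf a b (x + r n) else 0)" for n
  define Fi where "Fi t = indicator {0..} t * (g t/(x+t)^2)" for t
  have gmeas[measurable]: "g \<in> borel_measurable borel"
    unfolding g_def by measurable
  have Emeas[measurable]: "E n \<in> borel_measurable borel" for n
    unfolding E_def by measurable
  have Fimeas[measurable]: "Fi \<in> borel_measurable borel"
    unfolding Fi_def by measurable
  have Enn: "E n t \<ge> 0" for n t
    unfolding E_def using hh_nonneg[OF a b] by simp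
  have Esum_eq: "summable (\<lambda>n. E n t) \<and> Fi t = (\<Sum>n. E n t)" for t
  proof (cases "t \<ge> 0")
    case True
    have s: "summable (\<lambda>n. (if n \<in> N then hh a b (t - r n) else 0) / (x+t)^2)"
      by (intro summable_divide g_summable[OF a b pos summ])
    have e: "(\<lambda>n. (if n \<in> N then hh a b (t - r n) else 0) / (x+t)^2) = (\<lambda>n. E n t)"
      unfolding E_def by auto
    have "Fi t = g t / (x+t)^2" unfolding Fi_def using True by simp
    also have "\<dots> = (\<Sum>n. (if n \<in> N then hh a b (t - r n) else 0) / (x+t)^2)"
      unfolding g_def by (rule suminf_divide[OF g_summable[OF a b pos summ], symmetric])
    finally show ?thesis using s unfolding e by simp
  next
    case False
    have "E n t = 0" for n
      unfolding E_def using hh_zero[OF a b, of "t - r n"] pos[of n] False by auto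
    then show ?thesis using False unfolding Fi_def by simp
  qed
  have Eint: "(\<integral>\<^sup>+ t. ennreal (E n t) \<partial>lborel) = ennreal (Lt n)" for n
  proof (cases "n \<in> N")
    case True
    have "integral\<^sup>N lborel (\<lambda>t. hh a b (t - r n) / (x + t)^2) = ennreal (Lf a b (x + r n))"
      by (rule nn_integral_has_integral_lborel[OF _ _ E_has_integral[OF a b pos[OF True] x]])
         (use hh_nonneg[OF a b] in auto)
    then show ?thesis unfolding E_def Lt_def using True by simp
  next
    case False
    then show ?thesis unfolding E_def Lt_def by simp
  qed
  have Ltnn: "Lt n \<ge> 0" for n
    unfolding Lt_def using Lf_bounds(1)[OF _ a b] pos x by (simp add: add_pos_pos)
  have Ltsum: "summable Lt" unfolding Lt_def by (rule Lt_summable[OF a b pos x summ])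
  have "(\<integral>\<^sup>+ t. ennreal (Fi t) \<partial>lborel) = (\<integral>\<^sup>+ t. (\<Sum>n. ennreal (E n t)) \<partial>lborel)"
    using Esum_eq by (intro nn_integral_cong) (simp add: suminf_ennreal2 Enn)
  also have "\<dots> = (\<Sum>n. \<integral>\<^sup>+ t. ennreal (E n t) \<partial>lborel)"
    by (rule nn_integral_suminf) measurable
  also have "\<dots> = (\<Sum>n. ennreal (Lt n))" unfolding Eint ..
  also have "\<dots> = ennreal (\<Sum>n. Lt n)" by (rule suminf_ennreal2[OF Ltnn Ltsum])
  finally have nn: "(\<integral>\<^sup>+ t. ennreal (Fi t) \<partial>lborel) = ennreal (\<Sum>n. Lt n)" .
  have Finn: "Fi t \<ge> 0" for t using Esum_eq[of t] Enn by (simp add: suminf_nonneg)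
  have hb: "has_bochner_integral lborel Fi (\<Sum>n. Lt n)"
    by (rule has_bochner_integral_nn_integral[OF _ _ _ nn]) (auto simp: Finn intro!: suminf_nonneg Ltsum Ltnn)
  have Fi_eq: "(\<lambda>t. indicator {0..} t *\<^sub>R (g t/(x+t)^2)) = Fi"
    unfolding Fi_def by auto
  show "set_integrable lborel {0..} (\<lambda>t. g t/(x+t)^2)"
    unfolding set_integrable_def Fi_eq using hb by (rule integrable.intros)
  show "(LINT t:{0..}|lborel. g t/(x+t)^2) = (\<Sum>n. if n\<in>N then Lf a b (x + r n) else 0)"
    unfolding set_lebesgue_integral_def Fi_eq Lt_def[symmetric]
    using hb by (rule has_bochner_integral_integral_eq)
qed


theorem proposition4p4:
  fixes f :: "complex \<Rightarrow> complex" and r :: "nat \<Rightarrow> real" and N :: "nat set"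
    and a b c :: real
  assumes "genus1_neg_zeros f r N"
    and "a > 0" and "b > 0" and "c = a + b"
  shows "\<exists>F. (\<forall>x>0. complex_of_real (F x) =
                 Ln (f (of_real (x + a)) * f (of_real (x + b)) / (f (of_real x) * f (of_real (x + c)))))
          \<and> gen_stieltjes2_density F
              (conv_pointmasses (conv_fun (indicator {0<..<a}) (indicator {0<..<b})) r N)"
proof -
  have a: "a > 0" and b: "b > 0" using assms by auto
  have pos: "\<And>n. n \<in> N \<Longrightarrow> 0 < r n"
    and summ: "summable (\<lambda>n. if n \<in> N then 1 / (r n)^2 else 0)"
    and f0re: "Re (f 0) > 0"
    using assms(1) unfolding genus1_neg_zeros_def by auto
  obtain \<alpha> :: complex where prod: "\<And>z. (\<lambda>n. if n \<in> N then (1 + z / of_real (r n)) * exp (- z / of_real (r n)) else 1)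
               has_prod (f z / (f 0 * exp (\<alpha> * z)))"
    using assms(1) unfolding genus1_neg_zeros_def by blast
  have f0: "f 0 \<noteq> 0" using f0re by auto
  define g where "g = (\<lambda>t. \<Sum>n. if n \<in> N then hh a b (t - r n) else 0)"
  have conv: "conv_pointmasses (conv_fun (indicator {0<..<a}) (indicator {0<..<b})) r N = g"
  proof -
    have ch: "conv_fun (indicator {0<..<a}) (indicator {0<..<b}) = hh a b"
      by (rule ext) (rule conv_ind[OF a b])
    show ?thesis unfolding g_def conv_pointmasses_def ch ..
  qed
  define F where "F x = (\<Sum>n. if n \<in> N then Lf a b (x + r n) else 0)" for x
  show ?thesis
  proof (intro exI[of _ F] conjI allI impI)
    fix x :: real assume x: "x > 0"
    have S: "(\<lambda>n. if n \<in> N then Lf a b (x + r n) else 0) sums F x"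
      unfolding F_def by (rule summable_sums[OF Lt_summable[OF a b pos x summ]])
    have "f (of_real (x + a)) * f (of_real (x + b)) / (f (of_real x) * f (of_real (x + c)))
          = of_real (exp (F x))"
      using prod_part[OF prod pos f0 S x a b] assms(4) by simp
    then show "complex_of_real (F x) =
                 Ln (f (of_real (x + a)) * f (of_real (x + b)) / (f (of_real x) * f (of_real (x + c))))"
      by (simp add: Ln_of_real)
  next
    show "gen_stieltjes2_density F
              (conv_pointmasses (conv_fun (indicator {0<..<a}) (indicator {0<..<b})) r N)"
      unfolding conv gen_stieltjes2_density_def
    proof (intro conjI allI impI exI[of _ 0])
      fix t :: real
      show "0 \<le> g t" unfolding g_def
        by (intro suminf_nonneg g_summable[OF a b pos summ]) (use hh_nonneg[OF a b] in auto)
    next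
      show "g \<in> borel_measurable lborel" unfolding g_def by measurable
    next
      fix x :: real assume x: "x > 0"
      show "set_integrable lborel {0..} (\<lambda>t. g t / (x + t)\<^sup>2)"
        unfolding g_def by (rule integral_part(1)[OF a b pos x summ])
      show "F x = (LINT t:{0..}|lborel. g t / (x + t)\<^sup>2) + 0"
        unfolding g_def F_def by (simp add: integral_part(2)[OF a b pos x summ])
    qed simp
  qed
qed

end
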